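(* Let $k$ be a finite field of odd characteristic, let $A(t)\in k[t]$ be a square-free polynomial of odd degree $d>1$, and suppose that its derivative satisfies $A'(t)\equiv \gamma$ for some constant $\gamma\in k^*$. Let $E:y^2=f(x)$ be an elliptic curve defined over $k$, with $f(x)\in k[x]$ cubic, and let $E_A$ be the elliptic curve over $k(t)$ defined by $A(t)y^2=f(x)$. Suppose $(F,G)$ is an integral point of $E_A$ (i.e. $F,G\in k[t]$ with $A(t)G(t)^2=f(F(t))$) satisfying $F'\neq 0$. Then the following three conditions are equivalent: (A) $2 \deg F \leq d-1$; (B) $2 \deg G \leq \deg F-1$; (C) $G^2=\beta F'$ for some $\beta\in k^*$. Furthermore, if one of these conditions holds, then $j(E)=1728$.
   Context: $F'$ denotes the derivative of $F$ with respect to $t$; $j(E)$ is the $j$-invariant of $E$. *)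

theory Defs
  imports "HOL-Computational_Algebra.Computational_Algebra"
begin

(* Weierstrass invariants of the curve  y^2 = f(x),  f = a x^3 + b x^2 + c x + e,  a \<noteq> 0.
   Substituting X = a x, Y = a y gives the Weierstrass model
   Y^2 = X^3 + b X^2 + (a c) X + a^2 e, i.e. a1 = a3 = 0, a2 = b, a4 = a c, a6 = a^2 e. *)

definition wa2 :: "'a::field poly \<Rightarrow> 'a" where
  "wa2 f = coeff f 2"
definition wa4 :: "'a::field poly \<Rightarrow> 'a" where
  "wa4 f = coeff f 3 * coeff f 1"
definition wa6 :: "'a::field poly \<Rightarrow> 'a" where
  "wa6 f = (coeff f 3)^2 * coeff f 0"

definition wb2 :: "'a::field poly \<Rightarrow> 'a" where "wb2 f = 4 * wa2 f"
definition wb4 :: "'a::field poly \<Rightarrow> 'a" where "wb4 f = 2 * wa4 f"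
definition wb6 :: "'a::field poly \<Rightarrow> 'a" where "wb6 f = 4 * wa6 f"
definition wb8 :: "'a::field poly \<Rightarrow> 'a" where "wb8 f = 4 * wa2 f * wa6 f - (wa4 f)^2"

definition wc4 :: "'a::field poly \<Rightarrow> 'a" where "wc4 f = (wb2 f)^2 - 24 * wb4 f"

definition wdisc :: "'a::field poly \<Rightarrow> 'a" where
  "wdisc f = - ((wb2 f)^2 * wb8 f) - 8 * (wb4 f)^3 - 27 * (wb6 f)^2 + 9 * wb2 f * wb4 f * wb6 f"

definition is_elliptic_cubic :: "'a::field poly \<Rightarrow> bool" where
  "is_elliptic_cubic f \<longleftrightarrow> degree f = 3 \<and> wdisc f \<noteq> 0"

definition j_invariant :: "'a::field poly \<Rightarrow> 'a" where
  "j_invariant f = (wc4 f)^3 / wdisc f"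

end

theory Submission
  imports Defs "HOL-Algebra.Algebraic_Closure_Type"
begin

hide_const (open) Polynomials.degree Polynomials.lead_coeff up_ring.coeff module.smult


lemma lin_dvd_pcompose:
  fixes p F :: "'a::field poly"
  shows "(F - [:e:]) dvd (pcompose p F - [:poly p e:])"
proof -
  have "[:-e,1:] dvd (p - [:poly p e:])"
    by (simp add: dvd_iff_poly_eq_0)
  then obtain q where q: "p - [:poly p e:] = [:-e,1:] * q" by blast
  have "pcompose (p - [:poly p e:]) F = pcompose [:-e,1:] F * pcompose q F"
    by (subst q) (rule pcompose_mult)
  moreover have "pcompose [:-e,1:] F = F - [:e:]"
    by (simp add: pcompose_pCons)
  ultimately show ?thesis by (simp add: pcompose_diff)
qed

lemma coprime_shift:
  fixes P :: "'a::field poly"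
  assumes "c \<noteq> 0"
  shows "coprime P (P * Xq + [:c:])"
proof (rule coprimeI)
  fix e assume 1: "e dvd P" and 2: "e dvd P * Xq + [:c:]"
  have "e dvd P * Xq" using 1 by (rule dvd_mult2)
  with 2 have "e dvd [:c:]" by (simp add: dvd_add_right_iff)
  moreover have "is_unit [:c:]" using assms
    by (simp add: is_unit_const_poly_iff dvd_field_iff)
  ultimately show "is_unit e" by (rule dvd_unit_imp_unit)
qed

lemma smult2: "smult 2 (p :: 'a::field poly) = p + p"
  by (rule poly_eqI) (simp only: coeff_smult coeff_add mult_2)

lemma deriv_identity:
  fixes A f F G :: "'a::field poly"
  assumes point: "A * G^2 = pcompose f F" and dA: "pderiv A = [:\<gamma>:]"
  shows "pcompose (pderiv f) F * pderiv F = smult \<gamma> (G^2) + A * G * smult 2 (pderiv G)"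
proof -
  have "pcompose (pderiv f) F * pderiv F = pderiv (A * G^2)"
    by (simp only: point pderiv_pcompose)
  also have "\<dots> = smult \<gamma> (G^2) + A * G * smult 2 (pderiv G)"
  proof -
    have 1: "pderiv (A * G^2) = A * (G * pderiv G + G * pderiv G) + G^2 * [:\<gamma>:]"
      unfolding power2_eq_square pderiv_mult dA by (simp add: algebra_simps)
    have 2: "G^2 * [:\<gamma>:] = smult \<gamma> (G^2)"
      by (simp add: mult.commute)
    have 3: "A * G * smult 2 (pderiv G) = A * (G * pderiv G + G * pderiv G)"
      unfolding smult2 by (simp add: distrib_left mult.assoc)
    show ?thesis unfolding 1 2 3 by (simp add: add.commute)
  qed
  finally show ?thesis .
qed

lemma key_dvd:
  fixes A f F G B :: "'a::field poly"
  assumes point: "A * G^2 = pcompose f F" and dA: "pderiv A = [:\<gamma>:]"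
    and GF: "G dvd pderiv F" and BA: "B dvd A" and BP: "B dvd F - [:e:]"
  shows "B * G dvd smult (poly (pderiv f) e) (pderiv F) - smult \<gamma> (G^2)"
proof -
  have E: "pcompose (pderiv f) F * pderiv F = smult \<gamma> (G^2) + A * G * smult 2 (pderiv G)"
    by (rule deriv_identity[OF point dA])
  have 1: "B * G dvd pcompose (pderiv f) F * pderiv F - smult \<gamma> (G^2)"
  proof -
    have "B * G dvd A * G * smult 2 (pderiv G)"
      using BA by (intro dvd_mult2 mult_dvd_mono) auto
    thus ?thesis by (simp add: E)
  qed
  have 2: "B * G dvd (pcompose (pderiv f) F - [:poly (pderiv f) e:]) * pderiv F"
    by (intro mult_dvd_mono GF dvd_trans[OF BP lin_dvd_pcompose])
  have eq: "smult (poly (pderiv f) e) (pderiv F) - smult \<gamma> (G^2)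
      = (pcompose (pderiv f) F * pderiv F - smult \<gamma> (G^2))
        - (pcompose (pderiv f) F - [:poly (pderiv f) e:]) * pderiv F"
    by (simp add: algebra_simps)
  show ?thesis by (subst eq) (rule dvd_diff[OF 1 2])
qed

lemma pcompose_lin: "pcompose [:-e,1:] F = F - [:e::'a::field:]"
  by (simp add: pcompose_pCons)

lemma comp_f:
  fixes F :: "'a::field poly"
  shows "pcompose (smult a ([:-e1,1:]*[:-e2,1:]*[:-e3,1:])) F
     = smult a ((F - [:e1:]) * (F - [:e2:]) * (F - [:e3:]))"
  unfolding pcompose_smult pcompose_mult pcompose_lin ..

lemma comp_fd:
  fixes F :: "'a::field poly"
  shows "pcompose (pderiv (smult a ([:-e1,1:]*[:-e2,1:]*[:-e3,1:]))) F
     = smult a ((F - [:e1:]) * (F - [:e2:]) + (F - [:e3:]) * ((F - [:e1:]) + (F - [:e2:])))"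
proof -
  have l: "pderiv [:-e,1:] = (1::'a poly)" for e by (simp add: pderiv_pCons)
  show ?thesis
    unfolding pderiv_smult pderiv_mult l pcompose_smult pcompose_mult pcompose_add pcompose_lin pcompose_1
    by (simp add: algebra_simps)
qed

lemma ring_aux:
  fixes P1 P2 P3 U V :: "'a::comm_ring poly"
  assumes "P2 = P1 + U" "P3 = P1 + V"
  shows "P1 * P2 + P3 * (P1 + P2) = P1 * (P2 + P3 + P1 + U + V) + U * V"
  using assms by (simp add: algebra_simps)

lemma coprime_P_fd:
  fixes F :: "'a::field poly"
  assumes a: "a \<noteq> 0" and d12: "e1 \<noteq> e2" and d13: "e1 \<noteq> e3"
  shows "coprime (F - [:e1:]) (pcompose (pderiv (smult a ([:-e1,1:]*[:-e2,1:]*[:-e3,1:]))) F)"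
proof -
  define P1 where "P1 = F - [:e1:]"
  have h2: "F - [:e2:] = P1 + [:e1 - e2:]" by (simp add: P1_def)
  have h3: "F - [:e3:] = P1 + [:e1 - e3:]" by (simp add: P1_def)
  have "pcompose (pderiv (smult a ([:-e1,1:]*[:-e2,1:]*[:-e3,1:]))) F
      = smult a (P1 * (F - [:e2:] + (F - [:e3:]) + P1 + [:e1 - e2:] + [:e1 - e3:]) + [:e1 - e2:] * [:e1 - e3:])"
    unfolding comp_fd P1_def[symmetric] by (subst ring_aux[OF h2 h3]) simp
  also have "\<dots> = P1 * smult a (F - [:e2:] + (F - [:e3:]) + P1 + [:e1 - e2:] + [:e1 - e3:]) + [:a * ((e1 - e2) * (e1 - e3)):]"
  proof -
    have Xq: "smult a (P1 * Xq + [:u:] * [:v:]) = P1 * smult a Xq + [:a * (u * v):]" for Xq u v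
      by (simp add: smult_add_right mult_smult_right)
    show ?thesis by (rule Xq)
  qed
  finally have eq: "pcompose (pderiv (smult a ([:-e1,1:]*[:-e2,1:]*[:-e3,1:]))) F = \<dots>" .
  have "a * ((e1 - e2) * (e1 - e3)) \<noteq> 0" using a d12 d13 by simp
  then show ?thesis unfolding eq P1_def[symmetric] by (rule coprime_shift)
qed

lemma G_dvd_F':
  fixes A F G :: "'a::{field,normalization_euclidean_semiring,factorial_ring_gcd,semiring_gcd_mult_normalize} poly"
  assumes fdef: "f = smult a ([:-e1,1:]*[:-e2,1:]*[:-e3,1:])" and a: "a \<noteq> 0"
    and d12: "e1 \<noteq> e2" and d13: "e1 \<noteq> e3" and d23: "e2 \<noteq> e3"
    and point: "A * G^2 = pcompose f F" and dA: "pderiv A = [:\<gamma>:]"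
  shows "G dvd pderiv F"
proof -
  let ?Q = "pcompose (pderiv f) F"
  have c1: "coprime (F - [:e1:]) ?Q" unfolding fdef by (rule coprime_P_fd[OF a d12 d13])
  have f2: "f = smult a ([:-e2,1:]*[:-e1,1:]*[:-e3,1:])" by (simp only: fdef ac_simps)
  have c2: "coprime (F - [:e2:]) ?Q" unfolding f2 using a d12 d23 by (intro coprime_P_fd) auto
  have f3: "f = smult a ([:-e3,1:]*[:-e1,1:]*[:-e2,1:])" by (simp only: fdef ac_simps)
  have c3: "coprime (F - [:e3:]) ?Q" unfolding f3 using a d13 d23 by (intro coprime_P_fd) auto
  have cP: "coprime ((F - [:e1:]) * (F - [:e2:]) * (F - [:e3:])) ?Q"
    using c1 c2 c3 by (simp only: coprime_mult_left_iff)
  have "G dvd A * G^2" by (simp add: power2_eq_square)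
  hence "G dvd smult a ((F - [:e1:]) * (F - [:e2:]) * (F - [:e3:]))"
    by (simp only: point fdef comp_f)
  hence GP: "G dvd (F - [:e1:]) * (F - [:e2:]) * (F - [:e3:])"
    using a by (rule dvd_smult_cancel)
  have cG: "coprime G ?Q" by (rule coprime_divisors[OF GP dvd_refl cP])
  have "?Q * pderiv F = G * (smult \<gamma> G + A * smult 2 (pderiv G))"
    unfolding deriv_identity[OF point dA] by (simp add: power2_eq_square algebra_simps)
  hence "G dvd ?Q * pderiv F" by simp
  thus ?thesis using cG by (simp add: coprime_dvd_mult_right_iff)
qed

lemma degree_pderiv_le': "degree (pderiv (p :: 'a::field poly)) \<le> degree p - 1"
  by (rule degree_le) (auto simp: coeff_pderiv coeff_eq_0)

lemma poly_fd:
  fixes a e1 e2 e3 x :: "'a::field"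
  shows "poly (pderiv (smult a ([:-e1,1:]*[:-e2,1:]*[:-e3,1:]))) x
     = a * ((x - e1) * (x - e2) + (x - e3) * ((x - e1) + (x - e2)))"
proof -
  have l: "pderiv [:-e,1:] = (1::'a poly)" for e by (simp add: pderiv_pCons)
  show ?thesis unfolding pderiv_smult pderiv_mult l by (simp add: algebra_simps)
qed

lemma degree_f3:
  fixes a e1 e2 e3 :: "'a::field"
  assumes "a \<noteq> 0"
  shows "degree (smult a ([:-e1,1:]*[:-e2,1:]*[:-e3,1:])) = 3"
  using assms by (simp add: degree_mult_eq)

context
  fixes A f F G :: "'a::{field,normalization_euclidean_semiring,factorial_ring_gcd,semiring_gcd_mult_normalize} poly"
    and a e1 e2 e3 \<gamma> :: 'a
  assumes fdef: "f = smult a ([:-e1,1:]*[:-e2,1:]*[:-e3,1:])" and a: "a \<noteq> 0"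
    and d12: "e1 \<noteq> e2" and d13: "e1 \<noteq> e3" and d23: "e2 \<noteq> e3"
    and point: "A * G^2 = pcompose f F" and dA: "pderiv A = [:\<gamma>:]"
    and Fd: "pderiv F \<noteq> 0"
begin

lemma GF: "G dvd pderiv F"
  by (rule G_dvd_F'[OF fdef a d12 d13 d23 point dA])

lemma degF: "degree F > 0"
proof (rule ccontr)
  assume "\<not> degree F > 0"
  hence "degree F = 0" by simp
  then obtain c where "F = [:c:]" by (rule degree_eq_zeroE)
  thus False using Fd by (simp add: pderiv_pCons)
qed

lemma degP: "degree (F - [:e:]) = degree F"
proof -
  have "F - [:e:] = F + [:-e:]" by (simp add: diff_conv_add_uminus)
  moreover have "degree (F + [:-e:]) = degree F" using degF by (intro degree_add_eq_left) simp
  ultimately show ?thesis by metis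
qed

lemma deg_comp: "degree (pcompose f F) = 3 * degree F"
  by (simp only: degree_pcompose fdef degree_f3[OF a])

lemma nz: "A \<noteq> 0" "G \<noteq> 0"
proof -
  have "degree (pcompose f F) \<noteq> 0" using deg_comp degF by simp
  hence "pcompose f F \<noteq> 0" by auto
  hence "A * G^2 \<noteq> 0" using point by simp
  thus "A \<noteq> 0" "G \<noteq> 0" by auto
qed

lemma deg_rel: "degree A + 2 * degree G = 3 * degree F"
proof -
  have "degree (A * G^2) = degree A + 2 * degree G"
    using nz by (simp add: degree_mult_eq degree_power_eq)
  thus ?thesis using point deg_comp by simp
qed

lemma decomp:
  obtains B1 B2 B3 where "A = B1 * B2 * B3" "B1 dvd F - [:e1:]" "B2 dvd F - [:e2:]" "B3 dvd F - [:e3:]"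
proof -
  have "A dvd A * G^2" by simp
  hence "A dvd smult a ((F - [:e1:]) * (F - [:e2:]) * (F - [:e3:]))"
    by (simp only: point fdef comp_f)
  hence "A dvd (F - [:e1:]) * ((F - [:e2:]) * (F - [:e3:]))"
    using a by (simp only: mult.assoc) (rule dvd_smult_cancel)
  then obtain B1 C where 1: "A = B1 * C" "B1 dvd F - [:e1:]" "C dvd (F - [:e2:]) * (F - [:e3:])"
    using division_decomp by blast
  then obtain B2 B3 where 2: "C = B2 * B3" "B2 dvd F - [:e2:]" "B3 dvd F - [:e3:]"
    using division_decomp by blast
  show ?thesis using 1 2 that by (simp add: mult.assoc)
qed

lemma step:
  assumes AB: "A = B * R" and BP: "B dvd F - [:e:]" and big: "3 * degree B \<ge> degree A"
    and Bc: "2 * degree G + 1 \<le> degree F"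
  shows "smult (poly (pderiv f) e) (pderiv F) = smult \<gamma> (G^2)"
proof (rule ccontr)
  let ?M = "smult (poly (pderiv f) e) (pderiv F) - smult \<gamma> (G^2)"
  assume "\<not> ?thesis"
  hence M0: "?M \<noteq> 0" by simp
  have BA: "B dvd A" using AB by simp
  have kd: "B * G dvd ?M" by (rule key_dvd[OF point dA GF BA BP])
  have "A * G^2 = (B * G) * (R * G)" by (simp add: AB power2_eq_square ac_simps)
  also have "\<dots> dvd ?M * (R * G)" using kd by (rule mult_dvd_mono) simp
  finally have dv: "A * G^2 dvd ?M * (R * G)" .
  have R0: "R \<noteq> 0" "B \<noteq> 0" using nz AB by auto
  have "degree (A * G^2) \<le> degree (?M * (R * G))"
    using dv M0 R0 nz by (intro dvd_imp_degree_le) auto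
  also have "\<dots> = degree ?M + degree R + degree G"
    using M0 R0 nz by (simp add: degree_mult_eq)
  finally have i1: "degree (A * G^2) \<le> degree ?M + degree R + degree G" .
  have i2: "degree (A * G^2) = degree A + 2 * degree G"
    using nz by (simp add: degree_mult_eq degree_power_eq)
  have i3: "degree A = degree B + degree R" using AB R0 by (simp add: degree_mult_eq)
  have i4: "degree ?M \<le> degree F - 1"
  proof (rule degree_diff_le)
    show "degree (smult (poly (pderiv f) e) (pderiv F)) \<le> degree F - 1"
      using degree_smult_le[of "poly (pderiv f) e" "pderiv F"] degree_pderiv_le'[of F] by linarith
    show "degree (smult \<gamma> (G^2)) \<le> degree F - 1"
      using Bc nz degree_smult_le[of \<gamma> "G^2"] by (simp add: degree_power_eq)
  qed
  show False using i1 i2 i3 i4 big deg_rel Bc degF by linarith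
qed


lemma core_BC:
  assumes g0: "\<gamma> \<noteq> 0" and Bc: "2 * degree G + 1 \<le> degree F"
  shows "\<exists>\<beta>. \<beta> \<noteq> 0 \<and> G^2 = smult \<beta> (pderiv F)"
proof -
  obtain B1 B2 B3 where D: "A = B1 * B2 * B3" "B1 dvd F - [:e1:]" "B2 dvd F - [:e2:]" "B3 dvd F - [:e3:]"
    by (rule decomp)
  have B0: "B1 \<noteq> 0" "B2 \<noteq> 0" "B3 \<noteq> 0" using nz D(1) by auto
  have dsum: "degree A = degree B1 + degree B2 + degree B3"
    using D(1) B0 by (simp add: degree_mult_eq)
  have "\<exists>e. smult (poly (pderiv f) e) (pderiv F) = smult \<gamma> (G^2)"
  proof -
    consider "3 * degree B1 \<ge> degree A" | "3 * degree B2 \<ge> degree A" | "3 * degree B3 \<ge> degree A"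
      using dsum by linarith
    thus ?thesis
    proof cases
      case 1
      have "A = B1 * (B2 * B3)" using D(1) by (simp add: ac_simps)
      thus ?thesis using step[OF _ D(2) 1 Bc] by blast
    next
      case 2
      have "A = B2 * (B1 * B3)" using D(1) by (simp add: ac_simps)
      thus ?thesis using step[OF _ D(3) 2 Bc] by blast
    next
      case 3
      have "A = B3 * (B1 * B2)" using D(1) by (simp add: ac_simps)
      thus ?thesis using step[OF _ D(4) 3 Bc] by blast
    qed
  qed
  then obtain c where c: "smult c (pderiv F) = smult \<gamma> (G^2)" by blast
  have "c \<noteq> 0"
  proof
    assume "c = 0"
    hence "smult \<gamma> (G^2) = 0" using c by simp
    thus False using g0 nz by simp
  qed
  have "G^2 = smult (c / \<gamma>) (pderiv F)"
  proof -
    have "smult (1 / \<gamma>) (smult \<gamma> (G^2)) = G^2" using g0 by simp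
    thus ?thesis by (simp flip: c)
  qed
  thus ?thesis using \<open>c \<noteq> 0\<close> g0 by (intro exI[of _ "c / \<gamma>"]) simp
qed

lemma bad_dvd:
  assumes C: "G^2 = smult \<beta> (pderiv F)" and b0: "\<beta> \<noteq> 0"
    and BA: "B dvd A" and BP: "B dvd F - [:e:]" and ne: "poly (pderiv f) e \<noteq> \<beta> * \<gamma>"
  shows "B dvd G"
proof -
  have kd: "B * G dvd smult (poly (pderiv f) e) (pderiv F) - smult \<gamma> (G^2)"
    by (rule key_dvd[OF point dA GF BA BP])
  have "smult \<beta> (smult (poly (pderiv f) e) (pderiv F) - smult \<gamma> (G^2))
        = smult (poly (pderiv f) e - \<beta> * \<gamma>) (G * G)"
  proof -
    have C': "G * G = smult \<beta> (pderiv F)" using C by (simp add: power2_eq_square)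
    show ?thesis unfolding power2_eq_square C' by (rule poly_eqI) (simp add: algebra_simps)
  qed
  hence "B * G dvd smult (poly (pderiv f) e - \<beta> * \<gamma>) (G * G)"
    using kd by (metis dvd_smult)
  hence "B * G dvd G * G" using ne by (metis dvd_smult_cancel right_minus_eq)
  thus ?thesis using nz by simp
qed

lemma coprime_P:
  assumes "e \<noteq> e'"
  shows "coprime (F - [:e:]) (F - [:e':])"
proof -
  have eq: "(F - [:e:]) * 1 + [:e - e':] = F - [:e':]" by simp
  show ?thesis using coprime_shift[of "e - e'" "F - [:e:]" 1] assms unfolding eq by simp
qed

lemma two_bad_False:
  assumes Bc: "2 * degree G + 1 \<le> degree F"
    and A3: "A = Bi * Bj * Bk" and i: "Bi dvd F - [:ei:]" and j: "Bj dvd F - [:ej:]"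
    and k: "Bk dvd F - [:ek:]" and dij: "ei \<noteq> ej"
    and bi: "Bi dvd G" and bj: "Bj dvd G"
  shows False
proof -
  have cop: "coprime Bi Bj" by (rule coprime_divisors[OF i j coprime_P[OF dij]])
  have "Bi * Bj dvd G" by (rule divides_mult[OF bi bj cop])
  hence "degree (Bi * Bj) \<le> degree G" using nz by (intro dvd_imp_degree_le) auto
  moreover have B0: "Bi \<noteq> 0" "Bj \<noteq> 0" "Bk \<noteq> 0" using nz A3 by auto
  moreover have "degree Bk \<le> degree (F - [:ek:])"
    using k degF by (intro dvd_imp_degree_le) (auto simp: degP)
  moreover have "degree A = degree Bi + degree Bj + degree Bk"
    using A3 B0 by (simp add: degree_mult_eq)
  ultimately show False using deg_rel Bc by (simp add: degree_mult_eq degP)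
qed

lemma core_j:
  assumes Bc: "2 * degree G + 1 \<le> degree F"
    and C: "G^2 = smult \<beta> (pderiv F)" and b0: "\<beta> \<noteq> 0"
  shows "e1 + e2 = 2 * e3 \<or> e1 + e3 = 2 * e2 \<or> e2 + e3 = 2 * e1"
proof -
  obtain B1 B2 B3 where D: "A = B1 * B2 * B3" "B1 dvd F - [:e1:]" "B2 dvd F - [:e2:]" "B3 dvd F - [:e3:]"
    by (rule decomp)
  have BA: "B1 dvd A" "B2 dvd A" "B3 dvd A" using D(1) by auto
  let ?c = "\<lambda>e. poly (pderiv f) e"
  have h12: "\<not> (?c e1 \<noteq> \<beta> * \<gamma> \<and> ?c e2 \<noteq> \<beta> * \<gamma>)"
  proof
    assume H: "?c e1 \<noteq> \<beta> * \<gamma> \<and> ?c e2 \<noteq> \<beta> * \<gamma>"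
    show False
      using two_bad_False[OF Bc D(1) D(2) D(3) D(4) d12
          bad_dvd[OF C b0 BA(1) D(2)] bad_dvd[OF C b0 BA(2) D(3)]] H by blast
  qed
  have h13: "\<not> (?c e1 \<noteq> \<beta> * \<gamma> \<and> ?c e3 \<noteq> \<beta> * \<gamma>)"
  proof
    assume H: "?c e1 \<noteq> \<beta> * \<gamma> \<and> ?c e3 \<noteq> \<beta> * \<gamma>"
    have A': "A = B1 * B3 * B2" using D(1) by (simp add: ac_simps)
    show False
      using two_bad_False[OF Bc A' D(2) D(4) D(3) d13
          bad_dvd[OF C b0 BA(1) D(2)] bad_dvd[OF C b0 BA(3) D(4)]] H by blast
  qed
  have h23: "\<not> (?c e2 \<noteq> \<beta> * \<gamma> \<and> ?c e3 \<noteq> \<beta> * \<gamma>)"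
  proof
    assume H: "?c e2 \<noteq> \<beta> * \<gamma> \<and> ?c e3 \<noteq> \<beta> * \<gamma>"
    have A': "A = B2 * B3 * B1" using D(1) by (simp add: ac_simps)
    show False
      using two_bad_False[OF Bc A' D(3) D(4) D(2) d23
          bad_dvd[OF C b0 BA(2) D(3)] bad_dvd[OF C b0 BA(3) D(4)]] H by blast
  qed
  have cv: "?c x = a * ((x - e1) * (x - e2) + (x - e3) * ((x - e1) + (x - e2)))" for x
    unfolding fdef by (rule poly_fd)
  have r12: "?c e1 = ?c e2 \<Longrightarrow> e1 + e2 = 2 * e3"
  proof -
    assume "?c e1 = ?c e2"
    hence "a * (e1 - e2) * (e1 + e2 - 2 * e3) = 0" unfolding cv by (simp add: algebra_simps)
    thus ?thesis using a d12 by simp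
  qed
  have r13: "?c e1 = ?c e3 \<Longrightarrow> e1 + e3 = 2 * e2"
  proof -
    assume "?c e1 = ?c e3"
    hence "a * (e1 - e3) * (e1 + e3 - 2 * e2) = 0" unfolding cv by (simp add: algebra_simps)
    thus ?thesis using a d13 by simp
  qed
  have r23: "?c e2 = ?c e3 \<Longrightarrow> e2 + e3 = 2 * e1"
  proof -
    assume "?c e2 = ?c e3"
    hence "a * (e2 - e3) * (e2 + e3 - 2 * e1) = 0" unfolding cv by (simp add: algebra_simps)
    thus ?thesis using a d23 by simp
  qed
  show ?thesis using h12 h13 h23 r12 r13 r23 by metis
qed

end



lemma coeffs_f:
  fixes a e1 e2 e3 :: "'a::field"
  defines "f \<equiv> smult a ([:-e1,1:]*[:-e2,1:]*[:-e3,1:])"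
  shows "coeff f 3 = a" "coeff f 2 = - a * (e1 + e2 + e3)"
        "coeff f 1 = a * (e1*e2 + e1*e3 + e2*e3)" "coeff f 0 = - a * e1 * e2 * e3"
  unfolding f_def by (simp_all add: numeral_3_eq_3 numeral_2_eq_2 algebra_simps)

lemma wdisc_roots:
  fixes a e1 e2 e3 :: "'a::field"
  shows "wdisc (smult a ([:-e1,1:]*[:-e2,1:]*[:-e3,1:])) = 16 * a^6 * ((e1-e2)*(e1-e3)*(e2-e3))^2"
  unfolding wdisc_def wb2_def wb4_def wb6_def wb8_def wa2_def wa4_def wa6_def coeffs_f
  by Groebner_Basis.algebra

lemma j_roots:
  fixes a e1 e2 e3 :: "'a::field"
  assumes "e1 + e2 = 2 * e3"
  shows "(wc4 (smult a ([:-e1,1:]*[:-e2,1:]*[:-e3,1:])))^3 = 1728 * wdisc (smult a ([:-e1,1:]*[:-e2,1:]*[:-e3,1:]))"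
proof -
  have e1: "e1 = 2 * e3 - e2" using assms by (simp add: algebra_simps)
  show ?thesis
    unfolding wc4_def wdisc_def wb2_def wb4_def wb6_def wb8_def wa2_def wa4_def wa6_def coeffs_f e1
    by Groebner_Basis.algebra
qed


abbreviation acp :: "'a::field poly \<Rightarrow> 'a alg_closure poly" where
  "acp \<equiv> map_poly to_ac"

lemma coeff_acp [simp]: "coeff (acp p) n = to_ac (coeff p n)"
  by (simp add: coeff_map_poly)

lemma acp_add [simp]: "acp (p + q) = acp p + acp q"
  by (rule poly_eqI) simp

lemma acp_diff [simp]: "acp (p - q) = acp p - acp q"
  by (rule poly_eqI) simp

lemma acp_mult [simp]: "acp (p * q) = acp p * acp q"
  by (rule poly_eqI) (simp add: coeff_mult to_ac_sum)

lemma acp_smult [simp]: "acp (smult c p) = smult (to_ac c) (acp p)"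
  by (rule poly_eqI) simp

lemma acp_pCons [simp]: "acp (pCons a p) = pCons (to_ac a) (acp p)"
  by (rule poly_eqI) (simp add: coeff_pCons split: nat.split)

lemma acp_one [simp]: "acp 1 = 1"
  by (rule poly_eqI) (simp add: coeff_1)

lemma acp_power [simp]: "acp (p ^ n) = acp p ^ n"
  by (induction n) simp_all

lemma acp_pderiv [simp]: "acp (pderiv p) = pderiv (acp p)"
  by (rule poly_eqI) (simp add: coeff_pderiv)

lemma acp_pcompose [simp]: "acp (pcompose p q) = pcompose (acp p) (acp q)"
  by (induction p rule: pCons_induct) (simp_all add: pcompose_pCons)

lemma acp_eq_iff [simp]: "acp p = acp q \<longleftrightarrow> p = q"
proof
  assume "acp p = acp q"
  hence "coeff (acp p) n = coeff (acp q) n" for n by simp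
  thus "p = q" by (intro poly_eqI) simp
qed simp

lemma acp_eq_0_iff [simp]: "acp p = 0 \<longleftrightarrow> p = 0"
  using acp_eq_iff[of p 0] by simp

lemma degree_acp [simp]: "degree (acp p) = degree p"
  by (rule degree_map_poly) simp

lemma wc4_acp: "wc4 (acp f) = to_ac (wc4 f)"
  by (simp add: wc4_def wb2_def wb4_def wa2_def wa4_def)

lemma wdisc_acp: "wdisc (acp f) = to_ac (wdisc f)"
  by (simp add: wdisc_def wb2_def wb4_def wb6_def wb8_def wa2_def wa4_def wa6_def)

lemma factor3:
  fixes p :: "'a::alg_closed_field poly"
  assumes "degree p = 3"
  obtains e1 e2 e3 where "p = smult (lead_coeff p) ([:-e1,1:]*[:-e2,1:]*[:-e3,1:])"
proof -
  have "p \<noteq> 0" using assms by auto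
  then obtain M where M: "size M = degree p" "p = smult (lead_coeff p) (\<Prod>x\<in>#M. [:-x, 1:])"
    using alg_closed_imp_factorization by blast
  have sM: "size M = Suc (Suc (Suc 0))" using M(1) assms by simp
  then obtain e1 M1 where 1: "M = add_mset e1 M1"
    using size_eq_Suc_imp_eq_union by blast
  hence sM1: "size M1 = Suc (Suc 0)" using sM by simp
  then obtain e2 M2 where 2: "M1 = add_mset e2 M2"
    using size_eq_Suc_imp_eq_union by blast
  hence sM2: "size M2 = Suc 0" using sM1 by simp
  then obtain e3 M3 where 3: "M2 = add_mset e3 M3"
    using size_eq_Suc_imp_eq_union by blast
  hence "size M3 = 0" using sM2 by simp
  hence "M3 = {#}" by simp
  hence "M = {#e1, e2, e3#}" using 1 2 3 by simp
  hence "p = smult (lead_coeff p) ([:-e1,1:]*([:-e2,1:]*[:-e3,1:]))"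
    using M(2) by simp
  thus ?thesis using that by (simp only: mult.assoc)
qed

theorem theorem3p4:
  fixes A f F G :: "'k::field poly" and \<gamma> :: 'k
  assumes fin: "finite (UNIV :: 'k set)"
    and oddchar: "odd CHAR('k)"
    and sqf: "squarefree A"
    and odddeg: "odd (degree A)"
    and deg_gt: "degree A > 1"
    and deriv_A: "pderiv A = [:\<gamma>:]"
    and gamma_nz: "\<gamma> \<noteq> 0"
    and ell: "is_elliptic_cubic f"
    and point: "A * G^2 = pcompose f F"
    and F_deriv_nz: "pderiv F \<noteq> 0"
  shows "(2 * degree F \<le> degree A - 1
           \<longleftrightarrow> 2 * int (degree G) \<le> int (degree F) - 1)
       \<and> (2 * int (degree G) \<le> int (degree F) - 1
           \<longleftrightarrow> (\<exists>\<beta>. \<beta> \<noteq> 0 \<and> G^2 = smult \<beta> (pderiv F)))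
       \<and> (2 * degree F \<le> degree A - 1 \<longrightarrow> j_invariant f = 1728)"
  proof -
  have degf: "degree f = 3" and disc: "wdisc f \<noteq> 0"
    using ell by (simp_all add: is_elliptic_cubic_def)
  obtain e1 e2 e3 where fL0: "acp f = smult (lead_coeff (acp f)) ([:-e1,1:]*[:-e2,1:]*[:-e3,1:])"
    using factor3[of "acp f"] degf by auto
  define a where "a = lead_coeff (acp f)"
  have fL: "acp f = smult a ([:-e1,1:]*[:-e2,1:]*[:-e3,1:])" using fL0 a_def by simp
  have "f \<noteq> 0" using degf by auto
  hence aL: "a \<noteq> 0" by (simp add: a_def)
  have "16 * a^6 * ((e1-e2)*(e1-e3)*(e2-e3))^2 = to_ac (wdisc f)"
    using wdisc_roots[of a e1 e2 e3] fL wdisc_acp[of f] by simp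
  hence dprod: "16 * a^6 * ((e1-e2)*(e1-e3)*(e2-e3))^2 \<noteq> 0" using disc by simp
  have d12: "e1 \<noteq> e2" and d13: "e1 \<noteq> e3" and d23: "e2 \<noteq> e3"
    using dprod by auto
  have pointL: "acp A * (acp G)^2 = pcompose (acp f) (acp F)"
    using arg_cong[OF point, of acp] by simp
  have dAL: "pderiv (acp A) = [:to_ac \<gamma>:]"
    using arg_cong[OF deriv_A, of acp] by simp
  have FdL: "pderiv (acp F) \<noteq> 0" using F_deriv_nz by (simp flip: acp_pderiv)
  have g0L: "to_ac \<gamma> \<noteq> 0" using gamma_nz by simp
  note ctx = fL aL d12 d13 d23 pointL dAL FdL
  have DR: "degree A + 2 * degree G = 3 * degree F" using deg_rel[OF ctx] by simp
  have nF: "degree F > 0" using degF[OF ctx] by simp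
  have G0: "G \<noteq> 0" using nz(2)[OF ctx] by auto
  have AB: "(2 * degree F \<le> degree A - 1) \<longleftrightarrow> (2 * int (degree G) \<le> int (degree F) - 1)"
    using DR nF by linarith
  have BC1: "\<exists>\<beta>. \<beta> \<noteq> 0 \<and> G^2 = smult \<beta> (pderiv F)"
    if B: "2 * int (degree G) \<le> int (degree F) - 1"
  proof -
    have Bc: "2 * degree (acp G) + 1 \<le> degree (acp F)" using B by simp
    obtain \<beta>' where b': "\<beta>' \<noteq> 0" "(acp G)^2 = smult \<beta>' (pderiv (acp F))"
      using core_BC[OF ctx g0L Bc] by blast
    define \<beta> where "\<beta> = lead_coeff (G^2) / lead_coeff (pderiv F)"
    have lc: "lead_coeff (acp p) = to_ac (lead_coeff p)" for p by simp
    have "lead_coeff ((acp G)^2) = \<beta>' * lead_coeff (pderiv (acp F))"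
      using b'(2) by simp
    hence "to_ac (lead_coeff (G^2)) = \<beta>' * to_ac (lead_coeff (pderiv F))"
      by (simp only: lc flip: acp_power acp_pderiv)
    hence bb: "\<beta>' = to_ac \<beta>" using F_deriv_nz by (simp add: \<beta>_def field_simps)
    have "acp (G^2) = acp (smult \<beta> (pderiv F))" using b'(2) bb by simp
    hence "G^2 = smult \<beta> (pderiv F)" by (simp only: acp_eq_iff)
    moreover have "\<beta> \<noteq> 0" using b'(1) bb by auto
    ultimately show ?thesis by blast
  qed
  have BC2: "2 * int (degree G) \<le> int (degree F) - 1"
    if C: "\<exists>\<beta>. \<beta> \<noteq> 0 \<and> G^2 = smult \<beta> (pderiv F)"
  proof -
    obtain \<beta> where b: "\<beta> \<noteq> 0" "G^2 = smult \<beta> (pderiv F)" using C by blast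
    have "2 * degree G = degree (G^2)" using G0 by (simp add: degree_power_eq)
    also have "\<dots> = degree (pderiv F)" using b by simp
    also have "\<dots> \<le> degree F - 1" by (rule degree_pderiv_le')
    finally show ?thesis using nF by linarith
  qed
  have J: "j_invariant f = 1728" if Acond: "2 * degree F \<le> degree A - 1"
  proof -
    have B: "2 * int (degree G) \<le> int (degree F) - 1" using AB Acond by simp
    obtain \<beta> where b: "\<beta> \<noteq> 0" "G^2 = smult \<beta> (pderiv F)" using BC1[OF B] by blast
    have Bc: "2 * degree (acp G) + 1 \<le> degree (acp F)" using B by simp
    have CL: "(acp G)^2 = smult (to_ac \<beta>) (pderiv (acp F))"
      using arg_cong[OF b(2), of acp] by simp
    have b0L: "to_ac \<beta> \<noteq> 0" using b(1) by simp
    have rel: "e1 + e2 = 2 * e3 \<or> e1 + e3 = 2 * e2 \<or> e2 + e3 = 2 * e1"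
      by (rule core_j[OF ctx Bc CL b0L])
    have "(wc4 (acp f))^3 = 1728 * wdisc (acp f)"
    proof -
      consider "e1 + e2 = 2 * e3" | "e1 + e3 = 2 * e2" | "e2 + e3 = 2 * e1" using rel by blast
      thus ?thesis
      proof cases
        case 1 thus ?thesis unfolding fL by (rule j_roots)
      next
        case 2
        have "acp f = smult a ([:-e1,1:]*[:-e3,1:]*[:-e2,1:])" unfolding fL by (simp only: mult_ac)
        thus ?thesis using j_roots[OF 2, of a] by simp
      next
        case 3
        have "acp f = smult a ([:-e2,1:]*[:-e3,1:]*[:-e1,1:])" unfolding fL by (simp only: mult_ac)
        thus ?thesis using j_roots[OF 3, of a] by simp
      qed
    qed
    hence "to_ac ((wc4 f)^3) = to_ac (1728 * wdisc f)" by (simp add: wc4_acp wdisc_acp)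
    hence "(wc4 f)^3 = 1728 * wdisc f" by (simp only: to_ac_eq_iff)
    thus ?thesis using disc by (simp add: j_invariant_def)
  qed
  show ?thesis using AB BC1 BC2 J by blast
qed

end
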